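(* Let $m\geq 1$ be an integer and let $G$ be a connected graph with $n$ vertices and $n-1+m$ edges. Then the minor-3-core of $G$ has at most $2(m-1)$ vertices.
   Context: Graphs are simple and undirected. A minor of $G$ is a graph obtained from $G$ by vertex contractions (contracting a vertex $u$ into a neighbour $v$, i.e. an edge contraction keeping the name $v$) and subgraph operations. A minor-3-core of $G$ is a minor $H$ of $G$ with minimum degree at least $3$ such that no minor of $G$ with minimum degree at least $3$ has more edges than $H$; all minor-3-cores of $G$ are isomorphic, so one speaks of the minor-3-core. Equivalently, it is the graph obtained by repeatedly contracting a vertex of degree at most $2$ into a neighbour and deleting isolated vertices until neither operation applies. *)

theory Defs
  imports Main
begin

definition simple_graph :: "'a set \<Rightarrow> 'a set set \<Rightarrow> bool" where
  "simple_graph V E \<longleftrightarrow> finite V \<and>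
     (\<forall>e\<in>E. \<exists>u v. e = {u, v} \<and> u \<noteq> v \<and> u \<in> V \<and> v \<in> V)"

definition degree :: "'a set set \<Rightarrow> 'a \<Rightarrow> nat" where
  "degree E v = card {e \<in> E. v \<in> e}"

definition min_degree_ge :: "nat \<Rightarrow> 'a set \<Rightarrow> 'a set set \<Rightarrow> bool" where
  "min_degree_ge k V E \<longleftrightarrow> (\<forall>v\<in>V. k \<le> degree E v)"

definition connected_graph :: "'a set \<Rightarrow> 'a set set \<Rightarrow> bool" where
  "connected_graph V E \<longleftrightarrow> (\<forall>u\<in>V. \<forall>v\<in>V. (\<lambda>x y. {x, y} \<in> E)\<^sup>*\<^sup>* u v)"

text \<open>Contracting vertex u into its neighbour v (the merged vertex keeps the name v).\<close>

definition contract :: "'a \<Rightarrow> 'a \<Rightarrow> 'a set \<times> 'a set set \<Rightarrow> 'a set \<times> 'a set set" where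
  "contract u v G = (fst G - {u},
     {e \<in> snd G. u \<notin> e} \<union> {{w, v} | w. {w, u} \<in> snd G \<and> w \<noteq> v})"

definition subgraph :: "'a set \<times> 'a set set \<Rightarrow> 'a set \<times> 'a set set \<Rightarrow> bool" where
  "subgraph H G \<longleftrightarrow> fst H \<subseteq> fst G \<and> snd H \<subseteq> snd G \<and> (\<forall>e\<in>snd H. e \<subseteq> fst H)"

definition minor_step :: "'a set \<times> 'a set set \<Rightarrow> 'a set \<times> 'a set set \<Rightarrow> bool" where
  "minor_step G H \<longleftrightarrow> (\<exists>u v. {u, v} \<in> snd G \<and> u \<noteq> v \<and> H = contract u v G) \<or> subgraph H G"

definition is_minor :: "'a set \<times> 'a set set \<Rightarrow> 'a set \<times> 'a set set \<Rightarrow> bool" where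
  "is_minor H G \<longleftrightarrow> minor_step\<^sup>*\<^sup>* G H"

definition minor_3_core :: "'a set \<times> 'a set set \<Rightarrow> 'a set \<times> 'a set set \<Rightarrow> bool" where
  "minor_3_core H G \<longleftrightarrow> is_minor H G \<and> min_degree_ge 3 (fst H) (snd H) \<and>
     (\<forall>H'. is_minor H' G \<and> min_degree_ge 3 (fst H') (snd H') \<longrightarrow> card (snd H') \<le> card (snd H))"

end

theory Submission
  imports Defs
begin

definition conn :: "'a set set \<Rightarrow> 'a \<Rightarrow> 'a \<Rightarrow> bool" where
  "conn E = (\<lambda>x y. {x, y} \<in> E)\<^sup>*\<^sup>*"

definition cls :: "'a set set \<Rightarrow> 'a \<Rightarrow> 'a set" where
  "cls E x = {y. conn E x y}"

definition ncomp :: "'a set \<Rightarrow> 'a set set \<Rightarrow> nat" where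
  "ncomp V E = card (cls E ` V)"

lemma conn_refl: "conn E x x"
  by (simp add: conn_def)

lemma conn_edge: "{x, y} \<in> E \<Longrightarrow> conn E x y"
  unfolding conn_def by (rule r_into_rtranclp)

lemma conn_trans: "conn E x y \<Longrightarrow> conn E y z \<Longrightarrow> conn E x z"
  unfolding conn_def by (rule rtranclp_trans)

lemma conn_sym: "conn E x y \<Longrightarrow> conn E y x"
  unfolding conn_def
proof (induction rule: rtranclp_induct)
  case base then show ?case by simp
next
  case (step y z)
  have "{z, y} \<in> E" using step(2) by (simp add: insert_commute)
  then show ?case using step(3) by (meson converse_rtranclp_into_rtranclp)
qed

lemma cls_eq: "conn E x y \<Longrightarrow> cls E x = cls E y"
  unfolding cls_def by (auto intro: conn_trans conn_sym)

lemma in_cls: "y \<in> cls E y"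
  by (simp add: cls_def conn_refl)

lemma cls_eqD: "cls E x = cls E y \<Longrightarrow> conn E x y"
  using in_cls[of y E] by (metis cls_def mem_Collect_eq)

lemma conn_mono: assumes "F \<subseteq> F'" "conn F x y" shows "conn F' x y"
  using assms(2) unfolding conn_def
proof (induction rule: rtranclp_induct)
  case base then show ?case by simp
next
  case (step y z)
  then show ?case using assms(1) by (meson rtranclp.rtrancl_into_rtrancl subsetD)
qed

lemma card_factor:
  assumes "finite A" "\<forall>x\<in>A. \<forall>y\<in>A. h x = h y \<longrightarrow> g x = g y"
  shows "card (g ` A) \<le> card (h ` A)"
proof -
  define k where "k = (\<lambda>c. g (SOME x. x \<in> A \<and> h x = c))"
  have "g ` A = k ` (h ` A)"
  proof (intro set_eqI iffI)
    fix z assume "z \<in> g ` A"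
    then obtain x where x: "x \<in> A" "z = g x" by auto
    have "\<exists>y. y \<in> A \<and> h y = h x" using x by auto
    then have "(SOME y. y \<in> A \<and> h y = h x) \<in> A \<and> h (SOME y. y \<in> A \<and> h y = h x) = h x"
      by (rule someI_ex)
    then have "k (h x) = g x" unfolding k_def using assms(2) x by metis
    then show "z \<in> k ` (h ` A)" using x by (metis image_eqI)
  next
    fix z assume "z \<in> k ` (h ` A)"
    then obtain x where x: "x \<in> A" "z = k (h x)" by auto
    have "\<exists>y. y \<in> A \<and> h y = h x" using x by auto
    then have "(SOME y. y \<in> A \<and> h y = h x) \<in> A \<and> h (SOME y. y \<in> A \<and> h y = h x) = h x"
      by (rule someI_ex)
    then have "k (h x) = g x" unfolding k_def using assms(2) x by metis
    then show "z \<in> g ` A" using x by auto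
  qed
  then show ?thesis using assms(1) by (simp add: card_image_le)
qed

lemma conn_insert_cases:
  assumes "conn (insert {a, b} F) x y"
  shows "conn F x y \<or> (conn F x a \<and> conn F b y) \<or> (conn F x b \<and> conn F a y)"
  using assms unfolding conn_def[of "insert {a, b} F"]
proof (induction rule: rtranclp_induct)
  case base then show ?case by (simp add: conn_refl)
next
  case (step y z)
  from step(2) have "{y, z} \<in> F \<or> (y = a \<and> z = b) \<or> (y = b \<and> z = a)"
    by (auto simp: doubleton_eq_iff)
  then show ?case
  proof (elim disjE)
    assume "{y, z} \<in> F" then have "conn F y z" by (rule conn_edge)
    then show ?thesis using step(3) by (meson conn_trans)
  next
    assume "y = a \<and> z = b" then show ?thesis using step(3)
      by (meson conn_refl conn_sym conn_trans)
  next
    assume "y = b \<and> z = a" then show ?thesis using step(3)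
      by (meson conn_refl conn_sym conn_trans)
  qed
qed

lemma ncomp_insert:
  assumes "finite V"
  shows "ncomp V F \<le> ncomp V (insert {a, b} F) + 1"
proof -
  define V0 where "V0 = {x \<in> V. cls F x \<noteq> cls F a}"
  have sub: "cls F ` V \<subseteq> insert (cls F a) (cls F ` V0)" unfolding V0_def by auto
  have finV0: "finite V0" using assms by (simp add: V0_def)
  have "card (cls F ` V) \<le> card (insert (cls F a) (cls F ` V0))"
    by (rule card_mono[OF _ sub]) (simp add: finV0)
  also have "\<dots> \<le> card (cls F ` V0) + 1"
    using finV0 by (simp add: card_insert_if)
  also have "card (cls F ` V0) \<le> card (cls (insert {a, b} F) ` V0)"
  proof (rule card_factor)
    show "finite V0" by (rule finV0)
    show "\<forall>x\<in>V0. \<forall>y\<in>V0. cls (insert {a, b} F) x = cls (insert {a, b} F) y \<longrightarrow> cls F x = cls F y"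
    proof (intro ballI impI)
      fix x y assume xy: "x \<in> V0" "y \<in> V0" "cls (insert {a, b} F) x = cls (insert {a, b} F) y"
      have "conn (insert {a, b} F) x y" by (rule cls_eqD[OF xy(3)])
      then have "conn F x y \<or> (conn F x a \<and> conn F b y) \<or> (conn F x b \<and> conn F a y)"
        by (rule conn_insert_cases)
      moreover have nx: "cls F x \<noteq> cls F a" and ny: "cls F y \<noteq> cls F a" using xy(1,2) unfolding V0_def by auto
      ultimately show "cls F x = cls F y"
      proof (elim disjE conjE)
        assume "conn F x y" then show ?thesis by (rule cls_eq)
      next
        assume "conn F x a" then show ?thesis using nx cls_eq[of F x a] by simp
      next
        assume "conn F a y" then show ?thesis using ny cls_eq[of F a y] by simp
      qed
    qed
  qed
  also have "card (cls (insert {a, b} F) ` V0) \<le> card (cls (insert {a, b} F) ` V)"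
  proof -
    have "V0 \<subseteq> V" by (simp add: V0_def)
    then show ?thesis by (rule card_mono[OF finite_imageI[OF assms] image_mono])
  qed
  finally show ?thesis unfolding ncomp_def by simp
qed

lemma ncomp_add_edges:
  assumes "finite V" "finite D" "\<forall>e\<in>D. \<exists>a b. e = {a, b}"
  shows "ncomp V F \<le> ncomp V (F \<union> D) + card D"
  using assms(2,3)
proof (induction D rule: finite_induct)
  case empty then show ?case by simp
next
  case (insert e D)
  obtain a b where e: "e = {a, b}" using insert.prems by blast
  have 1: "ncomp V F \<le> ncomp V (F \<union> D) + card D" using insert.IH insert.prems by blast
  have 2: "ncomp V (F \<union> D) \<le> ncomp V (insert {a, b} (F \<union> D)) + 1"
    by (rule ncomp_insert[OF assms(1)])
  have 3: "insert {a, b} (F \<union> D) = F \<union> insert e D" using e by blast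
  have 4: "card (insert e D) = card D + 1" using insert.hyps by simp
  show ?case using 1 2 unfolding 3 4 by linarith
qed

lemma ncomp_isolated:
  assumes "finite V" "V' \<subseteq> V" "\<forall>e\<in>F. e \<subseteq> V'"
  shows "ncomp V' F + card (V - V') \<le> ncomp V F"
proof -
  have single: "cls F x = {x}" if "x \<notin> V'" for x
  proof -
    have "conn F x y \<Longrightarrow> y = x" for y
      unfolding conn_def
      by (erule converse_rtranclpE) (use assms(3) that in auto)
    then show ?thesis using in_cls[of x F] by (auto simp: cls_def)
  qed
  have eq: "cls F ` V = cls F ` V' \<union> cls F ` (V - V')" using assms(2) by auto
  have disj: "cls F ` V' \<inter> cls F ` (V - V') = {}"
  proof (rule ccontr)
    assume "cls F ` V' \<inter> cls F ` (V - V') \<noteq> {}"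
    then obtain y x where "y \<in> V'" "x \<in> V - V'" "cls F y = cls F x" by auto
    then show False using single[of x] in_cls[of y F] by auto
  qed
  have inj: "inj_on (cls F) (V - V')" using single by (auto intro!: inj_onI)
  have "card (cls F ` V) = card (cls F ` V') + card (cls F ` (V - V'))"
    unfolding eq using assms disj by (intro card_Un_disjoint) (auto intro: finite_subset)
  also have "card (cls F ` (V - V')) = card (V - V')" using inj by (rule card_image)
  finally show ?thesis unfolding ncomp_def by simp
qed


lemma simple_edge:
  assumes "simple_graph V E" "e \<in> E"
  obtains a b where "e = {a, b}" "a \<noteq> b" "a \<in> V" "b \<in> V"
  using assms unfolding simple_graph_def by blast

lemma simple_finE:
  assumes "simple_graph V E" shows "finite E"
proof -
  have "E \<subseteq> Pow V" using assms by (auto elim!: simple_edge)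
  moreover have "finite V" using assms simple_graph_def by blast
  ultimately show ?thesis by (meson finite_Pow_iff finite_subset)
qed

lemma step_subgraph:
  assumes sg: "simple_graph V E" and sub: "V' \<subseteq> V" "F \<subseteq> E" "\<forall>e\<in>F. e \<subseteq> V'"
  shows "simple_graph V' F \<and> card F + card V + ncomp V' F \<le> card E + card V' + ncomp V E"
proof
  have finV: "finite V" using sg simple_graph_def by blast
  have finE: "finite E" using sg by (rule simple_finE)
  show "simple_graph V' F"
    unfolding simple_graph_def
  proof
    show "finite V'" using finV sub(1) by (rule finite_subset[rotated])
    show "\<forall>e\<in>F. \<exists>u v. e = {u, v} \<and> u \<noteq> v \<and> u \<in> V' \<and> v \<in> V'"
    proof
      fix e assume e: "e \<in> F"
      then have "e \<in> E" using sub(2) by blast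
      then obtain a b where ab: "e = {a, b}" "a \<noteq> b" using sg by (auto elim: simple_edge)
      moreover have "e \<subseteq> V'" using e sub(3) by blast
      ultimately show "\<exists>u v. e = {u, v} \<and> u \<noteq> v \<and> u \<in> V' \<and> v \<in> V'" by blast
    qed
  qed
  have 1: "ncomp V' F + card (V - V') \<le> ncomp V F"
    by (rule ncomp_isolated[OF finV sub(1) sub(3)])
  have D: "\<forall>e\<in>E - F. \<exists>a b. e = {a, b}" using sg unfolding simple_graph_def by blast
  have 2: "ncomp V F \<le> ncomp V (F \<union> (E - F)) + card (E - F)"
    by (rule ncomp_add_edges[OF finV _ D]) (use finE in simp)
  have 3: "F \<union> (E - F) = E" using sub(2) by blast
  have 4: "card (E - F) + card F = card E" using finE sub(2)
    by (metis card_Diff_subset card_mono diff_add finite_subset)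
  have 5: "card (V - V') + card V' = card V" using finV sub(1)
    by (metis card_Diff_subset card_mono diff_add finite_subset)
  show "card F + card V + ncomp V' F \<le> card E + card V' + ncomp V E"
    using 1 2 4 5 unfolding 3 by linarith
qed


lemma simple_edge2:
  assumes "simple_graph V E" "{x, y} \<in> E"
  shows "x \<noteq> y \<and> x \<in> V \<and> y \<in> V"
proof -
  obtain a b where "{x, y} = {a, b}" "a \<noteq> b" "a \<in> V" "b \<in> V"
    using assms by (rule simple_edge)
  then show ?thesis by (auto simp: doubleton_eq_iff)
qed

lemma step_contract:
  assumes sg: "simple_graph V E" and uv: "{u, v} \<in> E"
  defines "V' \<equiv> V - {u}"
    and "F \<equiv> {e \<in> E. u \<notin> e} \<union> {{w, v} | w. {w, u} \<in> E \<and> w \<noteq> v}"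
  shows "simple_graph V' F \<and> card F + card V + ncomp V' F \<le> card E + card V' + ncomp V E"
proof -
  have finV: "finite V" using sg simple_graph_def by blast
  have finE: "finite E" using sg by (rule simple_finE)
  have uvV: "u \<noteq> v" "u \<in> V" "v \<in> V" using simple_edge2[OF sg uv] by auto
  define A where "A = {e \<in> E. u \<notin> e}"
  define W where "W = {w. {w, u} \<in> E \<and> w \<noteq> v}"
  define Du where "Du = {e \<in> E. u \<in> e}"
  have FAB: "F = A \<union> (\<lambda>w. {w, v}) ` W" unfolding F_def A_def W_def by blast
  have WV: "W \<subseteq> V" unfolding W_def using simple_edge2[OF sg] by blast
  have finW: "finite W" using WV finV by (rule finite_subset)
  have finA: "finite A" "finite Du" using finE unfolding A_def Du_def by auto
  have "card F \<le> card A + card ((\<lambda>w. {w, v}) ` W)"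
    unfolding FAB by (rule card_Un_le)
  also have "card ((\<lambda>w. {w, v}) ` W) \<le> card W" by (rule card_image_le[OF finW])
  also have "card W = card ((\<lambda>w. {w, u}) ` W)"
    by (rule card_image[symmetric]) (auto intro!: inj_onI simp: doubleton_eq_iff)
  also have "card ((\<lambda>w. {w, u}) ` W) \<le> card (Du - {{u, v}})"
  proof (rule card_mono)
    show "finite (Du - {{u, v}})" using finA by simp
    show "(\<lambda>w. {w, u}) ` W \<subseteq> Du - {{u, v}}"
      unfolding W_def Du_def using uvV(1) by (auto simp: doubleton_eq_iff)
  qed
  also have "card (Du - {{u, v}}) = card Du - 1"
    using uv unfolding Du_def by simp
  finally have c1: "card F \<le> card A + (card Du - 1)" by simp
  have "card A + card Du = card E"
  proof -
    have "A \<union> Du = E" "A \<inter> Du = {}" unfolding A_def Du_def by auto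
    then show ?thesis using finA card_Un_disjoint by metis
  qed
  moreover have "card Du \<ge> 1"
  proof -
    have "{u, v} \<in> Du" using uv unfolding Du_def by simp
    then show ?thesis using finA(2) by (metis One_nat_def Suc_leI card_gt_0_iff empty_iff)
  qed
  ultimately have cardF: "card F + 1 \<le> card E" using c1 by linarith
  have cardV: "card V' + 1 = card V" unfolding V'_def
    using card_Suc_Diff1[OF finV uvV(2)] by simp
  have simple': "simple_graph V' F"
    unfolding simple_graph_def
  proof
    show "finite V'" using finV unfolding V'_def by simp
    show "\<forall>e\<in>F. \<exists>x y. e = {x, y} \<and> x \<noteq> y \<and> x \<in> V' \<and> y \<in> V'"
    proof
      fix e assume "e \<in> F"
      then consider "e \<in> E" "u \<notin> e" | w where "e = {w, v}" "{w, u} \<in> E" "w \<noteq> v"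
        unfolding F_def by blast
      then show "\<exists>x y. e = {x, y} \<and> x \<noteq> y \<and> x \<in> V' \<and> y \<in> V'"
      proof cases
        case 1
        then obtain a b where "e = {a, b}" "a \<noteq> b" "a \<in> V" "b \<in> V"
          using simple_edge[OF sg] by blast
        then show ?thesis using 1 unfolding V'_def by blast
      next
        case 2
        then have "w \<noteq> u" "w \<in> V" using simple_edge2[OF sg 2(2)] by auto
        then show ?thesis using 2 uvV unfolding V'_def by blast
      qed
    qed
  qed
  define \<phi> where "\<phi> = (\<lambda>x. if x = u then v else x)"
  have connF: "conn F (\<phi> x) (\<phi> y)" if "conn E x y" for x y
    using that unfolding conn_def[of E]
  proof (induction rule: rtranclp_induct)
    case base then show ?case by (simp add: conn_refl)
  next
    case (step y z)
    have yz: "y \<noteq> z" using simple_edge2[OF sg step(2)] by simp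
    have "conn F (\<phi> y) (\<phi> z)"
    proof (cases "y = u \<or> z = u")
      case False
      then have "{y, z} \<in> F" using step(2) unfolding F_def by auto
      then show ?thesis using False unfolding \<phi>_def by (simp add: conn_edge)
    next
      case True
      then show ?thesis
      proof
        assume yu: "y = u"
        show ?thesis
        proof (cases "z = v")
          case True then show ?thesis using yu yz unfolding \<phi>_def by (simp add: conn_refl)
        next
          case False
          have "{z, u} \<in> E" using step(2) yu by (simp add: insert_commute)
          then have "{z, v} \<in> F" using False unfolding F_def by blast
          then have "conn F z v" by (rule conn_edge)
          then show ?thesis using yu yz unfolding \<phi>_def by (simp add: conn_sym)
        qed
      next
        assume zu: "z = u"
        show ?thesis
        proof (cases "y = v")
          case True then show ?thesis using zu yz unfolding \<phi>_def by (simp add: conn_refl)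
        next
          case False
          have "{y, u} \<in> E" using step(2) zu by simp
          then have "{y, v} \<in> F" using False unfolding F_def by blast
          then have "conn F y v" by (rule conn_edge)
          then show ?thesis using zu yz unfolding \<phi>_def by simp
        qed
      qed
    qed
    then show ?case using step(3) by (rule conn_trans[rotated])
  qed
  have img: "\<phi> ` V = V'" unfolding \<phi>_def V'_def using uvV by auto
  have "cls F ` V' = (\<lambda>x. cls F (\<phi> x)) ` V" unfolding img[symmetric] by auto
  then have "ncomp V' F = card ((\<lambda>x. cls F (\<phi> x)) ` V)" unfolding ncomp_def by simp
  also have "\<dots> \<le> card (cls E ` V)"
  proof (rule card_factor[OF finV], intro ballI impI)
    fix x y assume "cls E x = cls E y"
    then have "conn E x y" by (rule cls_eqD)
    then show "cls F (\<phi> x) = cls F (\<phi> y)" by (intro cls_eq connF)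
  qed
  finally have "ncomp V' F \<le> ncomp V E" unfolding ncomp_def .
  then show ?thesis using simple' cardF cardV by linarith
qed


lemma minor_inv:
  assumes "minor_step\<^sup>*\<^sup>* G0 G'" "simple_graph (fst G0) (snd G0)"
  shows "simple_graph (fst G') (snd G') \<and>
    card (snd G') + card (fst G0) + ncomp (fst G') (snd G') \<le>
    card (snd G0) + card (fst G') + ncomp (fst G0) (snd G0)"
  using assms(1)
proof (induction rule: rtranclp_induct)
  case base then show ?case using assms(2) by simp
next
  case (step G1 G2)
  obtain V1 E1 where G1: "G1 = (V1, E1)" by (cases G1)
  obtain V2 E2 where G2: "G2 = (V2, E2)" by (cases G2)
  have sg1: "simple_graph V1 E1" using step.IH G1 by simp
  have st: "simple_graph V2 E2 \<and> card E2 + card V1 + ncomp V2 E2 \<le> card E1 + card V2 + ncomp V1 E1"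
    using step(2) unfolding minor_step_def
  proof (elim disjE exE conjE)
    fix u v assume "{u, v} \<in> snd G1" "u \<noteq> v" "G2 = contract u v G1"
    then show ?thesis using step_contract[OF sg1, of u v] G1 G2 by (simp add: contract_def)
  next
    assume "subgraph G2 G1"
    then have "V2 \<subseteq> V1" "E2 \<subseteq> E1" "\<forall>e\<in>E2. e \<subseteq> V2" using G1 G2 by (auto simp: subgraph_def)
    from step_subgraph[OF sg1 this] show ?thesis .
  qed
  then show ?case using step.IH G1 G2 by auto
qed

lemma handshake:
  assumes "simple_graph V E"
  shows "(\<Sum>x\<in>V. degree E x) = 2 * card E"
proof -
  have finV: "finite V" using assms simple_graph_def by blast
  have finE: "finite E" using assms by (rule simple_finE)
  have "(\<Sum>x\<in>V. degree E x) = (\<Sum>x\<in>V. \<Sum>e\<in>E. if x \<in> e then 1 else 0)"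
    unfolding degree_def using finE by (simp add: sum.inter_filter[symmetric])
  also have "\<dots> = (\<Sum>e\<in>E. \<Sum>x\<in>V. if x \<in> e then 1 else 0)" by (rule sum.swap)
  also have "\<dots> = (\<Sum>e\<in>E. 2)"
  proof (rule sum.cong[OF refl])
    fix e assume "e \<in> E"
    then obtain a b where ab: "e = {a, b}" "a \<noteq> b" "a \<in> V" "b \<in> V"
      using simple_edge[OF assms] by blast
    have "(\<Sum>x\<in>V. if x \<in> e then 1 else 0) = card (V \<inter> e)"
      using finV by (simp add: sum.inter_filter[symmetric] Int_def)
    also have "V \<inter> e = {a, b}" using ab by auto
    finally show "(\<Sum>x\<in>V. if x \<in> e then 1 else (0::nat)) = 2" using ab by simp
  qed
  finally show ?thesis by simp
qed

theorem lemma24: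
  fixes V :: "'a set" and E :: "'a set set" and m :: nat and H :: "'a set \<times> 'a set set"
  assumes "simple_graph V E"
    and "connected_graph V E"
    and "m \<ge> 1"
    and "card E + 1 = card V + m"
    and "minor_3_core H (V, E)"
  shows "card (fst H) \<le> 2 * (m - 1)"
proof -
  have mn: "minor_step\<^sup>*\<^sup>* (V, E) H" "min_degree_ge 3 (fst H) (snd H)"
    using assms(5) unfolding minor_3_core_def is_minor_def by auto
  have inv: "simple_graph (fst H) (snd H) \<and>
    card (snd H) + card V + ncomp (fst H) (snd H) \<le> card E + card (fst H) + ncomp V E"
    using minor_inv[OF mn(1)] assms(1) by simp
  have c1: "ncomp V E \<le> 1"
  proof (cases "V = {}")
    case True then show ?thesis by (simp add: ncomp_def)
  next
    case False
    then obtain x0 where x0: "x0 \<in> V" by blast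
    have "cls E ` V \<subseteq> {cls E x0}"
    proof
      fix C assume "C \<in> cls E ` V"
      then obtain y where y: "y \<in> V" "C = cls E y" by blast
      have "conn E x0 y" using assms(2) x0 y(1) unfolding connected_graph_def conn_def by blast
      then show "C \<in> {cls E x0}" using y cls_eq by fastforce
    qed
    then show ?thesis unfolding ncomp_def by (metis card.empty card.insert empty_iff finite.intros(1) card_mono finite.emptyI finite_insert One_nat_def)
  qed
  show ?thesis
  proof (cases "fst H = {}")
    case True then show ?thesis by simp
  next
    case False
    have finH: "finite (fst H)" using inv simple_graph_def by blast
    have "ncomp (fst H) (snd H) \<ge> 1"
      unfolding ncomp_def using False finH by (simp add: Suc_leI card_gt_0_iff)
    have "3 * card (fst H) \<le> (\<Sum>x\<in>fst H. degree (snd H) x)"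
      using mn(2) sum_bounded_below[of "fst H" 3 "degree (snd H)"] unfolding min_degree_ge_def
      by (simp add: mult.commute)
    also have "\<dots> = 2 * card (snd H)" using inv handshake by blast
    finally show ?thesis using inv c1 assms(4) \<open>ncomp (fst H) (snd H) \<ge> 1\<close> by linarith
  qed
qed

end
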